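(* Let $\mathbb{F}\in\{\mathbb{R},\mathbb{C}\}$. A tensor $\mathcal{A}\in\mathbb{F}^{[n_1,\ldots,n_m]}$ is $\mathbb{F}$-separable if and only if there exists a Borel measure $\mu$ with support contained in $\mathbb{S}_{\mathbb{F}}^{n_1,\ldots,n_m}$ such that $\mathcal{A}=\int[x_1,\ldots,x_m]_{\otimes h}\,d\mu$.
   Context: $\mathbb{C}^{[n_1,\ldots,n_m]}$ is the real vector space of tensors $\mathcal{H}\in\mathbb{C}^{n_1\times\cdots\times n_m\times n_1\times\cdots\times n_m}$ with $\mathcal{H}_{i_1\ldots i_m j_1\ldots j_m}=\overline{\mathcal{H}_{j_1\ldots j_m i_1\ldots i_m}}$; $\mathbb{R}^{[n_1,\ldots,n_m]}$ is its subset of real tensors. For $v_i\in\mathbb{F}^{n_i}$, $[v_1,\ldots,v_m]_{\otimes h}:=v_1\otimes\cdots\otimes v_m\otimes\overline{v_1}\otimes\cdots\otimes\overline{v_m}$. A tensor is $\mathbb{F}$-separable if it equals $\sum_{i=1}^r[u_i^1,\ldots,u_i^m]_{\otimes h}$ for some $u_i^j\in\mathbb{F}^{n_j}$. $\mathbb{S}_{\mathbb{F}}^{n_1,\ldots,n_m}:=\{(x_1,\ldots,x_m)\in\mathbb{F}^{n_1}\times\cdots\times\mathbb{F}^{n_m}:\|x_1\|=\cdots=\|x_m\|=1\}$ (Euclidean norms). *)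

theory Defs
  imports "HOL-Analysis.Analysis"
begin

text \<open>The field F is encoded as a subset K of the complex numbers,
  K = \<real> (real case) or K = UNIV (complex case). The dimension tuple (n_1,...,n_m)
  is the list dims, m = length dims. A multi-index is a list of length m;
  a tensor in C^[n_1,...,n_m] is a function A :: nat list \<Rightarrow> nat list \<Rightarrow> complex,
  where A i j is the entry H_{i_1..i_m j_1..j_m}; it is required to vanish outside
  the valid index range. A tuple (x_1,...,x_m) of vectors is a function
  x :: nat \<Rightarrow> nat \<Rightarrow> complex with x k i the i-th entry of x_(k+1) (0-based).\<close>

definition midx :: "nat list \<Rightarrow> nat list set" where
  "midx dims = {i. length i = length dims \<and> (\<forall>k<length dims. i ! k < dims ! k)}"

definition hten :: "nat list \<Rightarrow> (nat \<Rightarrow> nat \<Rightarrow> complex) \<Rightarrow> nat list \<Rightarrow> nat list \<Rightarrow> complex" where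
  "hten dims x = (\<lambda>i j. if i \<in> midx dims \<and> j \<in> midx dims
      then (\<Prod>k<length dims. x k (i ! k) * cnj (x k (j ! k))) else 0)"

definition herm_tensors :: "complex set \<Rightarrow> nat list \<Rightarrow> (nat list \<Rightarrow> nat list \<Rightarrow> complex) set" where
  "herm_tensors K dims = {A.
      (\<forall>i j. (i \<in> midx dims \<and> j \<in> midx dims) \<or> A i j = 0) \<and>
      (\<forall>i\<in>midx dims. \<forall>j\<in>midx dims. A i j = cnj (A j i) \<and> A i j \<in> K)}"

definition separable :: "complex set \<Rightarrow> nat list \<Rightarrow> (nat list \<Rightarrow> nat list \<Rightarrow> complex) \<Rightarrow> bool" where
  "separable K dims A \<longleftrightarrow> (\<exists>(r::nat) (u :: nat \<Rightarrow> nat \<Rightarrow> nat \<Rightarrow> complex).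
      (\<forall>l<r. \<forall>k<length dims. \<forall>i<dims ! k. u l k i \<in> K) \<and>
      A = (\<lambda>i j. \<Sum>l<r. hten dims (u l) i j))"

definition sphere_prod :: "complex set \<Rightarrow> nat list \<Rightarrow> (nat \<Rightarrow> nat \<Rightarrow> complex) set" where
  "sphere_prod K dims = {x.
      (\<forall>k i. (k < length dims \<and> i < dims ! k) \<or> x k i = 0) \<and>
      (\<forall>k<length dims. (\<forall>i<dims ! k. x k i \<in> K) \<and> (\<Sum>i<dims ! k. (cmod (x k i))\<^sup>2) = 1)}"

definition msupport :: "'a::topological_space measure \<Rightarrow> 'a set" where
  "msupport \<mu> = {x. \<forall>U. open U \<longrightarrow> x \<in> U \<longrightarrow> emeasure \<mu> U > 0}"

end

theory Submission
  imports Defs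
begin

definition ipr :: "'j set \<Rightarrow> ('j \<Rightarrow> real) \<Rightarrow> ('j \<Rightarrow> real) \<Rightarrow> real" where
  "ipr J a v = (\<Sum>j\<in>J. a j * v j)"
definition suppd :: "'j set \<Rightarrow> ('j \<Rightarrow> real) set" where
  "suppd J = {v. \<forall>j. j \<notin> J \<longrightarrow> v j = 0}"
definition coneh :: "('j \<Rightarrow> real) set \<Rightarrow> ('j \<Rightarrow> real) set" where
  "coneh T = {v. \<exists>(r::nat) c t. (\<forall>l<r. 0 \<le> c l \<and> t l \<in> T) \<and> v = (\<lambda>j. \<Sum>l<r. c l * t l j)}"

lemma h1: "(s::real) > 0 \<Longrightarrow> t > 0 \<Longrightarrow> 0 \<le> t * A + s * B \<Longrightarrow> -A/s \<le> B/t"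
  by (simp add: field_simps)
lemma h2: "(s::real) > 0 \<Longrightarrow> -A/s \<le> q \<Longrightarrow> 0 \<le> q * s + A"
  by (simp add: field_simps)
lemma h3: "(s::real) < 0 \<Longrightarrow> q \<le> A/(-s) \<Longrightarrow> 0 \<le> q * s + A"
  by (simp add: field_simps)

lemma h4: assumes "(b::real) < 0" "\<forall>s>0. 0 \<le> b - s * c" shows False
proof -
  define s where "s = - b / (2 * (\<bar>c\<bar> + 1))"
  have d: "2 * (\<bar>c\<bar> + 1) > 0" by simp
  have sp: "s > 0" using divide_neg_pos[OF assms(1) d] unfolding s_def by simp
  have "s * \<bar>c\<bar> \<le> - b / 2"
  proof -
    have "s * \<bar>c\<bar> = (- b / 2) * (\<bar>c\<bar> / (\<bar>c\<bar> + 1))" unfolding s_def by (simp add: field_simps)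
    also have "\<dots> \<le> (- b / 2) * 1" using assms(1)
      by (intro mult_left_mono) auto
    finally show ?thesis by simp
  qed
  moreover have "s * c \<ge> - (s * \<bar>c\<bar>)" using sp
    by (metis abs_ge_minus_self abs_mult abs_of_pos minus_le_iff)
  ultimately have "b - s * c < 0" using assms(1) by linarith
  thus False using assms(2) sp by force
qed
lemma sum_shift: "(\<Sum>l<r1+(r2::nat). g l) = (\<Sum>l<r1. g l) + (\<Sum>l<r2. g (r1 + l))"
  by (induction r2) (auto simp: add.commute add.left_commute)

lemma ipr_comb: "ipr J a (\<lambda>j. s * x j + t * y j) = s * ipr J a x + t * ipr J a y"
  unfolding ipr_def by (simp add: algebra_simps sum.distrib sum_distrib_left)

lemma sep0:
  assumes "finite J" "J \<noteq> {}" "P \<subseteq> suppd J"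
    "\<And>x y. x\<in>P \<Longrightarrow> y\<in>P \<Longrightarrow> (\<lambda>j. x j + y j) \<in> P"
    "\<And>x c. x\<in>P \<Longrightarrow> c > 0 \<Longrightarrow> (\<lambda>j. c * x j) \<in> P"
    "(\<lambda>j. 0) \<notin> P"
  shows "\<exists>a. (\<exists>j\<in>J. a j \<noteq> 0) \<and> (\<forall>x\<in>P. 0 \<le> ipr J a x)"
  using assms
proof (induction J arbitrary: P rule: finite_induct)
  case empty thus ?case by simp
next
  case (insert i J')
  have comb: "(\<lambda>j. s * x j + t * y j) \<in> P" if "x \<in> P" "y \<in> P" "s > 0" "t > 0" for x y s t
    using insert.prems(3)[OF insert.prems(4)[OF that(1,3)] insert.prems(4)[OF that(2,4)]] .
  have iprI: "ipr (insert i J') a x = a i * x i + ipr J' a x" for a x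
    unfolding ipr_def using insert.hyps by simp
  show ?case
  proof (cases "\<forall>x\<in>P. 0 \<le> x i")
    case True
    define a where "a = (\<lambda>j. if j = i then 1 else (0::real))"
    have "ipr J' a x = 0" for x unfolding ipr_def a_def using insert.hyps by (auto intro!: sum.neutral)
    then show ?thesis using True by (intro exI[of _ a]) (auto simp: iprI a_def)
  next
    case False
    then obtain x where x: "x \<in> P" "x i < 0" by auto
    show ?thesis
    proof (cases "\<forall>y\<in>P. y i \<le> 0")
      case True
      define a where "a = (\<lambda>j. if j = i then -1 else (0::real))"
      have "ipr J' a x = 0" for x unfolding ipr_def a_def using insert.hyps by (auto intro!: sum.neutral)
      then show ?thesis using True by (intro exI[of _ a]) (auto simp: iprI a_def)
    next
      case False
      then obtain y where y: "y \<in> P" "y i > 0" by auto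
      define P' where "P' = {z\<in>P. z i = 0}"
      define z where "z = (\<lambda>j. (- x i) * y j + y i * x j)"
      have "z \<in> P" unfolding z_def by (rule comb[OF y(1) x(1)]) (use x y in auto)
      hence zP: "z \<in> P'" unfolding P'_def z_def using x y by auto
      have "J' \<noteq> {}"
      proof
        assume "J' = {}"
        have "z = (\<lambda>j. 0)"
        proof
          fix j show "z j = 0"
          proof (cases "j = i")
            case True thus ?thesis using zP P'_def by auto
          next
            case False
            thus ?thesis using zP insert.prems(2) \<open>J' = {}\<close> unfolding P'_def suppd_def by auto
          qed
        qed
        thus False using zP insert.prems(5) P'_def by auto
      qed
      have "P' \<subseteq> suppd J'" using insert.prems(2) unfolding P'_def suppd_def by auto
      moreover have "\<And>x y. x\<in>P' \<Longrightarrow> y\<in>P' \<Longrightarrow> (\<lambda>j. x j + y j) \<in> P'"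
        using insert.prems(3) unfolding P'_def by auto
      moreover have "\<And>x c. x\<in>P' \<Longrightarrow> c > 0 \<Longrightarrow> (\<lambda>j. c * x j) \<in> P'"
        using insert.prems(4) unfolding P'_def by auto
      moreover have "(\<lambda>j. 0) \<notin> P'" using insert.prems(5) unfolding P'_def by auto
      ultimately obtain a' where a': "\<exists>j\<in>J'. a' j \<noteq> 0" "\<forall>x\<in>P'. 0 \<le> ipr J' a' x"
        using insert.IH[OF \<open>J' \<noteq> {}\<close>] by blast
      define L where "L = {- ipr J' a' w / w i | w. w \<in> P \<and> w i > 0}"
      define U where "U = {ipr J' a' w / (- w i) | w. w \<in> P \<and> w i < 0}"
      have key: "l \<le> u" if lL: "l \<in> L" and uU: "u \<in> U" for l u
      proof -
        obtain w where w: "w \<in> P" "w i > 0" "l = - ipr J' a' w / w i" using lL unfolding L_def by blast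
        obtain v where v: "v \<in> P" "v i < 0" "u = ipr J' a' v / (- v i)" using uU unfolding U_def by blast
        have "(\<lambda>j. (- v i) * w j + w i * v j) \<in> P"
          by (rule comb[OF w(1) v(1)]) (use w v in auto)
        hence "(\<lambda>j. (- v i) * w j + w i * v j) \<in> P'"
          unfolding P'_def using w v by auto
        hence "0 \<le> ipr J' a' (\<lambda>j. (- v i) * w j + w i * v j)" using a'(2) by blast
        hence "0 \<le> (- v i) * ipr J' a' w + w i * ipr J' a' v" by (simp only: ipr_comb)
        thus ?thesis using w v h1[of "w i" "- v i"] by simp
      qed
      have Lne: "L \<noteq> {}" using y L_def by auto
      have Une: "U \<noteq> {}" using x U_def by auto
      obtain u0 where "u0 \<in> U" using Une by auto
      have bdd: "bdd_above L" by (rule bdd_aboveI[of _ u0]) (use key \<open>u0 \<in> U\<close> in blast)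
      define \<alpha> where "\<alpha> = Sup L"
      have al: "l \<le> \<alpha>" if "l \<in> L" for l using cSup_upper[OF that bdd] \<alpha>_def by simp
      have au: "\<alpha> \<le> u" if "u \<in> U" for u using cSup_least[OF Lne] key that \<alpha>_def by auto
      define a where "a = a'(i := \<alpha>)"
      have ipa: "ipr J' a w = ipr J' a' w" for w unfolding ipr_def a_def using insert.hyps
        by (intro sum.cong) auto
      have "0 \<le> ipr (insert i J') a w" if "w \<in> P" for w
      proof -
        have e: "ipr (insert i J') a w = \<alpha> * w i + ipr J' a' w" using iprI ipa a_def by simp
        consider "w i > 0" | "w i < 0" | "w i = 0" by linarith
        then show ?thesis
        proof cases
          case 1
          hence "- ipr J' a' w / w i \<le> \<alpha>" using al that L_def by auto
          thus ?thesis using 1 e h2 by metis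
        next
          case 2
          hence "\<alpha> \<le> ipr J' a' w / (- w i)" using au that U_def by auto
          thus ?thesis using 2 e h3 by metis
        next
          case 3
          hence "w \<in> P'" using that P'_def by auto
          thus ?thesis using a'(2) e 3 by auto
        qed
      qed
      moreover have "\<exists>j\<in>insert i J'. a j \<noteq> 0" using a' insert.hyps a_def by auto
      ultimately show ?thesis by blast
    qed
  qed
qed

lemma coneh_zero: "(\<lambda>j. 0) \<in> coneh T"
  unfolding coneh_def by (rule CollectI, rule exI[of _ 0]) auto

lemma coneh_single: "t \<in> T \<Longrightarrow> t \<in> coneh T"
  unfolding coneh_def by (rule CollectI, rule exI[of _ 1], rule exI[of _ "\<lambda>_. 1"], rule exI[of _ "\<lambda>_. t"]) auto

lemma coneh_scale: assumes "v \<in> coneh T" "0 \<le> s" shows "(\<lambda>j. s * v j) \<in> coneh T"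
proof -
  obtain r c t where h: "\<forall>l<(r::nat). 0 \<le> c l \<and> t l \<in> T" "v = (\<lambda>j. \<Sum>l<r. c l * t l j)"
    using assms(1) unfolding coneh_def by blast
  show ?thesis unfolding coneh_def
    by (rule CollectI, rule exI[of _ r], rule exI[of _ "\<lambda>l. s * c l"], rule exI[of _ t])
       (use h assms(2) in \<open>auto simp: sum_distrib_left mult.assoc\<close>)
qed

lemma coneh_add: assumes "v \<in> coneh T" "w \<in> coneh T" shows "(\<lambda>j. v j + w j) \<in> coneh T"
proof -
  obtain r c t where h: "\<forall>l<(r::nat). 0 \<le> c l \<and> t l \<in> T" "v = (\<lambda>j. \<Sum>l<r. c l * t l j)"
    using assms(1) unfolding coneh_def by blast
  obtain r2 c2 t2 where h2: "\<forall>l<(r2::nat). 0 \<le> c2 l \<and> t2 l \<in> T" "w = (\<lambda>j. \<Sum>l<r2. c2 l * t2 l j)"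
    using assms(2) unfolding coneh_def by blast
  define C where "C = (\<lambda>l. if l < r then c l else c2 (l - r))"
  define T3 where "T3 = (\<lambda>l. if l < r then t l else t2 (l - r))"
  have "(\<lambda>j. v j + w j) = (\<lambda>j. \<Sum>l<r+r2. C l * T3 l j)"
    unfolding sum_shift h h2 C_def T3_def by auto
  moreover have "\<forall>l<r+r2. 0 \<le> C l \<and> T3 l \<in> T" using h h2 unfolding C_def T3_def by auto
  ultimately show ?thesis unfolding coneh_def by blast
qed

lemma coneh_mono: "T \<subseteq> T' \<Longrightarrow> coneh T \<subseteq> coneh T'"
  unfolding coneh_def by blast

lemma coneh_supp: "T \<subseteq> suppd J \<Longrightarrow> coneh T \<subseteq> suppd J"
  unfolding coneh_def suppd_def by (auto intro!: sum.neutral)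

lemma ipr_sum: "ipr J a (\<lambda>j. \<Sum>l<r. c l * t l j) = (\<Sum>l<r. c l * ipr J a (t l))"
  unfolding ipr_def by (simp add: sum_distrib_left sum.swap[of _ J] mult.left_commute)

lemma ipr_remove: "finite J \<Longrightarrow> i \<in> J \<Longrightarrow> ipr J a v = a i * v i + ipr (J - {i}) a v"
  unfolding ipr_def by (simp add: sum.remove)

lemma mean:
  fixes f :: "'x \<Rightarrow> 'j \<Rightarrow> real"
  assumes "finite J" "T \<subseteq> suppd J" "AE x in M. f x \<in> T"
    "\<And>j. j \<in> J \<Longrightarrow> integrable M (\<lambda>x. f x j)"
  shows "(\<lambda>j. if j \<in> J then (\<integral>x. f x j \<partial>M) else 0) \<in> coneh T"
  using assms
proof (induction "card J" arbitrary: J T f rule: less_induct)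
  case less
  note fin = less.prems(1) and TJ = less.prems(2) and AEf = less.prems(3) and intf = less.prems(4)
  define p where "p = (\<lambda>j. if j \<in> J then (\<integral>x. f x j \<partial>M) else 0)"
  have pJ: "p \<in> suppd J" unfolding p_def suppd_def by auto
  show ?case unfolding p_def[symmetric]
  proof (rule ccontr)
    assume np: "p \<notin> coneh T"
    have Jne: "J \<noteq> {}"
    proof
      assume "J = {}"
      hence "p = (\<lambda>j. 0)" unfolding p_def by auto
      thus False using np coneh_zero by metis
    qed
    define P where "P = {(\<lambda>j. v j - s * p j) | v s. v \<in> coneh T \<and> s > 0}"
    have "P \<subseteq> suppd J" unfolding P_def using coneh_supp[OF TJ] pJ unfolding suppd_def by auto
    moreover have "(\<lambda>j. x j + y j) \<in> P" if xP: "x \<in> P" and yP: "y \<in> P" for x y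
    proof -
      obtain v s where vs: "v \<in> coneh T" "s > 0" "x = (\<lambda>j. v j - s * p j)" using xP P_def by auto
      obtain v2 s2 where vs2: "v2 \<in> coneh T" "s2 > 0" "y = (\<lambda>j. v2 j - s2 * p j)" using yP P_def by auto
      have "(\<lambda>j. x j + y j) = (\<lambda>j. (v j + v2 j) - (s + s2) * p j)" using vs vs2 by (auto simp: algebra_simps)
      thus ?thesis unfolding P_def using coneh_add[OF vs(1) vs2(1)] vs(2) vs2(2)
        by (intro CollectI exI[of _ "\<lambda>j. v j + v2 j"] exI[of _ "s + s2"]) auto
    qed
    moreover have "(\<lambda>j. c * x j) \<in> P" if xP: "x \<in> P" and cp: "c > 0" for x c
    proof -
      obtain v s where vs: "v \<in> coneh T" "s > 0" "x = (\<lambda>j. v j - s * p j)" using xP P_def by auto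
      have "(\<lambda>j. c * x j) = (\<lambda>j. c * v j - (c * s) * p j)" using vs by (auto simp: algebra_simps)
      thus ?thesis unfolding P_def using coneh_scale[OF vs(1), of c] vs(2) cp
        by (intro CollectI exI[of _ "\<lambda>j. c * v j"] exI[of _ "c * s"]) auto
    qed
    moreover have "(\<lambda>j. 0) \<notin> P"
    proof
      assume "(\<lambda>j. 0) \<in> P"
      then obtain v s where vs: "v \<in> coneh T" "s > 0" "(\<lambda>j. 0::real) = (\<lambda>j. v j - s * p j)" using P_def by auto
      have "p = (\<lambda>j. (1 / s) * v j)"
      proof
        fix j have "v j = s * p j" using fun_cong[OF vs(3), of j] by simp
        thus "p j = (1 / s) * v j" using vs(2) by simp
      qed
      thus False using coneh_scale[OF vs(1), of "1/s"] vs(2) np by simp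
    qed
    ultimately obtain a where a: "\<exists>j\<in>J. a j \<noteq> 0" "\<forall>x\<in>P. 0 \<le> ipr J a x"
      using sep0[OF fin Jne, of P] by blast
    have ipP: "0 \<le> ipr J a v - s * ipr J a p" if "v \<in> coneh T" "s > 0" for v s
    proof -
      have "(\<lambda>j. v j - s * p j) \<in> P" unfolding P_def using that by blast
      hence "0 \<le> ipr J a (\<lambda>j. v j - s * p j)" using a(2) by blast
      also have "ipr J a (\<lambda>j. v j - s * p j) = ipr J a v - s * ipr J a p"
        unfolding ipr_def by (simp add: algebra_simps sum_subtractf sum_distrib_left)
      finally show ?thesis .
    qed
    have ipp: "ipr J a p \<le> 0" using ipP[OF coneh_zero, of 1] by (simp add: ipr_def)
    have ipT: "0 \<le> ipr J a t" if "t \<in> T" for t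
    proof (rule ccontr)
      assume "\<not> 0 \<le> ipr J a t"
      hence "ipr J a t < 0" by simp
      moreover have "\<forall>s>0. 0 \<le> ipr J a t - s * ipr J a p" using ipP[OF coneh_single[OF that]] by blast
      ultimately show False by (rule h4)
    qed
    define g where "g = (\<lambda>x. ipr J a (f x))"
    have intg: "integrable M g" unfolding g_def ipr_def using intf by auto
    have intg_eq: "integral\<^sup>L M g = ipr J a p"
      unfolding g_def ipr_def p_def using intf by (simp add: integral_sum)
    have AEg: "AE x in M. 0 \<le> g x" using AEf by eventually_elim (use ipT g_def in auto)
    have "0 \<le> integral\<^sup>L M g" using AEg by (rule integral_nonneg_AE)
    hence g0: "integral\<^sup>L M g = 0" and ipp0: "ipr J a p = 0" using ipp intg_eq by auto
    have AEg0: "AE x in M. g x = 0" using integral_nonneg_eq_0_iff_AE[OF intg AEg] g0 by simp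
    obtain i where i: "i \<in> J" "a i \<noteq> 0" using a(1) by blast
    define J' where "J' = J - {i}"
    define T' where "T' = (\<lambda>v. v(i := 0)) ` {t\<in>T. ipr J a t = 0}"
    define f' where "f' = (\<lambda>x. (f x)(i := 0))"
    have cJ': "card J' < card J" unfolding J'_def using fin i by (meson card_Diff1_less)
    have "T' \<subseteq> suppd J'" using TJ unfolding T'_def J'_def suppd_def by auto
    moreover have "AE x in M. f' x \<in> T'" using AEf AEg0
      by eventually_elim (auto simp: T'_def f'_def g_def)
    moreover have "integrable M (\<lambda>x. f' x j)" if "j \<in> J'" for j
      using intf[of j] that unfolding J'_def f'_def by auto
    ultimately have "(\<lambda>j. if j \<in> J' then (\<integral>x. f' x j \<partial>M) else 0) \<in> coneh T'"
      using less.hyps[OF cJ'] fin J'_def by blast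
    moreover have "(\<lambda>j. if j \<in> J' then (\<integral>x. f' x j \<partial>M) else 0) = p(i := 0)"
      unfolding J'_def f'_def p_def by auto
    ultimately have "p(i := 0) \<in> coneh T'" by simp
    then obtain r c t' where rc: "\<forall>l<(r::nat). 0 \<le> c l \<and> t' l \<in> T'" "p(i := 0) = (\<lambda>j. \<Sum>l<r. c l * t' l j)"
      unfolding coneh_def by blast
    have "\<forall>l. \<exists>tt. l < r \<longrightarrow> tt \<in> T \<and> ipr J a tt = 0 \<and> t' l = tt(i := 0)"
      using rc(1) unfolding T'_def by blast
    then obtain t where t: "\<And>l. l < r \<Longrightarrow> t l \<in> T \<and> ipr J a (t l) = 0 \<and> t' l = (t l)(i := 0)"
      by metis
    define q where "q = (\<lambda>j. \<Sum>l<r. c l * t l j)"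
    have qj: "q j = p j" if "j \<noteq> i" for j
    proof -
      have "q j = (\<Sum>l<r. c l * t' l j)" unfolding q_def using t that by (auto intro!: sum.cong)
      also have "\<dots> = (p(i := 0)) j" using rc(2) by simp
      finally show ?thesis using that by simp
    qed
    have "ipr J' a q = ipr J' a p" unfolding ipr_def J'_def using qj by (auto intro!: sum.cong)
    have "ipr J a q = (\<Sum>l<r. c l * ipr J a (t l))" unfolding q_def by (rule ipr_sum)
    also have "\<dots> = 0" using t by auto
    finally have "a i * q i + ipr J' a q = 0" using ipr_remove[OF fin i(1)] J'_def by simp
    moreover have "a i * p i + ipr J' a p = 0" using ipp0 ipr_remove[OF fin i(1)] J'_def by simp
    ultimately have "a i * q i = a i * p i" using \<open>ipr J' a q = ipr J' a p\<close> by linarith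
    hence "q i = p i" using i(2) by simp
    hence "p = q" using qj by (metis ext)
    moreover have "q \<in> coneh T" unfolding coneh_def q_def using rc(1) t by blast
    ultimately show False using np by simp
  qed
qed


lemma finite_midx: "finite (midx dims)"
proof -
  have "midx dims \<subseteq> {xs. set xs \<subseteq> {..<Max (set dims)} \<and> length xs = length dims}"
  proof
    fix i assume "i \<in> midx dims"
    hence h: "length i = length dims" "\<forall>k<length dims. i ! k < dims ! k" unfolding midx_def by auto
    have "set i \<subseteq> {..<Max (set dims)}"
    proof
      fix z assume "z \<in> set i"
      then obtain k where k: "k < length i" "z = i ! k" by (auto simp: in_set_conv_nth)
      have "dims ! k \<le> Max (set dims)" using k h(1) by (intro Max_ge) auto
      moreover have "i ! k < dims ! k" using h(2) k h(1) by auto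
      ultimately show "z \<in> {..<Max (set dims)}" using k(2) by simp
    qed
    thus "i \<in> {xs. set xs \<subseteq> {..<Max (set dims)} \<and> length xs = length dims}" using h by auto
  qed
  thus ?thesis using finite_lists_length_eq[of "{..<Max (set dims)}" "length dims"] finite_subset by auto
qed

lemma cont_coord: "continuous_on UNIV (\<lambda>x::nat \<Rightarrow> nat \<Rightarrow> complex. x k a)"
proof -
  have "continuous_on UNIV (\<lambda>x::nat \<Rightarrow> nat \<Rightarrow> complex. x k)" by simp
  moreover have "continuous_on UNIV (\<lambda>y::nat \<Rightarrow> complex. y a)" by simp
  ultimately show ?thesis using continuous_on_compose[of UNIV "\<lambda>x::nat \<Rightarrow> nat \<Rightarrow> complex. x k" "\<lambda>y. y a"]
      continuous_on_subset[of UNIV "\<lambda>y::nat \<Rightarrow> complex. y a" "range (\<lambda>x::nat \<Rightarrow> nat \<Rightarrow> complex. x k)"]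
    by (simp add: comp_def)
qed

lemma hten_meas: "(\<lambda>x. hten dims x i j) \<in> borel_measurable borel"
proof -
  have "continuous_on UNIV (\<lambda>x::nat \<Rightarrow> nat \<Rightarrow> complex. \<Prod>k<length dims. x k (i ! k) * cnj (x k (j ! k)))"
    by (intro continuous_intros cont_coord)
  hence "(\<lambda>x::nat \<Rightarrow> nat \<Rightarrow> complex. \<Prod>k<length dims. x k (i ! k) * cnj (x k (j ! k))) \<in> borel_measurable borel"
    by (rule borel_measurable_continuous_onI)
  thus ?thesis unfolding hten_def by (cases "i \<in> midx dims \<and> j \<in> midx dims") auto
qed

lemma ae_support:
  fixes \<mu> :: "'a::second_countable_topology measure"
  assumes "sets \<mu> = sets borel"
  shows "AE x in \<mu>. x \<in> msupport \<mu>"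
proof -
  define F where "F = {U. open U \<and> emeasure \<mu> U = 0}"
  obtain F' where F': "F' \<subseteq> F" "countable F'" "\<Union>F' = \<Union>F"
    using Lindelof[of F] unfolding F_def by auto
  have "(\<Union>U\<in>F'. U) \<in> null_sets \<mu>"
  proof (rule null_sets_UN')
    show "countable F'" by fact
    fix U assume "U \<in> F'"
    hence "open U" "emeasure \<mu> U = 0" using F' F_def by auto
    thus "U \<in> null_sets \<mu>" using assms by (auto intro: null_setsI)
  qed
  moreover have "{x \<in> space \<mu>. x \<notin> msupport \<mu>} \<subseteq> (\<Union>U\<in>F'. U)"
  proof
    fix x assume "x \<in> {x \<in> space \<mu>. x \<notin> msupport \<mu>}"
    then obtain U where "open U" "x \<in> U" "\<not> emeasure \<mu> U > 0" unfolding msupport_def by auto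
    hence "U \<in> F" unfolding F_def by (auto simp: not_gr_zero)
    thus "x \<in> (\<Union>U\<in>F'. U)" using F'(3) \<open>x \<in> U\<close> by auto
  qed
  ultimately show ?thesis by (rule AE_I')
qed


lemma bwd:
  fixes K :: "complex set" and dims :: "nat list"
    and A :: "nat list \<Rightarrow> nat list \<Rightarrow> complex" and \<mu> :: "(nat \<Rightarrow> nat \<Rightarrow> complex) measure"
  assumes K: "K = \<real> \<or> K = UNIV"
    and dne: "dims \<noteq> []"
    and AH: "A \<in> herm_tensors K dims"
    and sets: "sets \<mu> = sets borel"
    and supp: "msupport \<mu> \<subseteq> sphere_prod K dims"
    and int: "\<forall>i\<in>midx dims. \<forall>j\<in>midx dims. has_bochner_integral \<mu> (\<lambda>x. hten dims x i j) (A i j)"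
  shows "separable K dims A"
proof -
  let ?S = "sphere_prod K dims"
  define J where "J = midx dims \<times> midx dims \<times> (UNIV :: bool set)"
  define Fv where "Fv = (\<lambda>x (q :: nat list \<times> nat list \<times> bool).
     if fst q \<in> midx dims \<and> fst (snd q) \<in> midx dims then
       (if snd (snd q) then Re (hten dims x (fst q) (fst (snd q))) else Im (hten dims x (fst q) (fst (snd q))))
     else 0)"
  define T where "T = Fv ` ?S"
  have finJ: "finite J" unfolding J_def using finite_midx by auto
  have TJ: "T \<subseteq> suppd J" unfolding T_def suppd_def J_def Fv_def by auto
  have "AE x in \<mu>. x \<in> ?S" using ae_support[OF sets] by eventually_elim (use supp in auto)
  hence AEF: "AE x in \<mu>. Fv x \<in> T" by eventually_elim (auto simp: T_def)
  have hb: "has_bochner_integral \<mu> (\<lambda>x. Fv x q) (if snd (snd q) then Re (A (fst q) (fst (snd q))) else Im (A (fst q) (fst (snd q))))"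
    if "q \<in> J" for q
  proof -
    have i: "fst q \<in> midx dims" "fst (snd q) \<in> midx dims" using that J_def by auto
    have h: "has_bochner_integral \<mu> (\<lambda>x. hten dims x (fst q) (fst (snd q))) (A (fst q) (fst (snd q)))"
      using int i by auto
    show ?thesis using has_bochner_integral_Re[OF h] has_bochner_integral_Im[OF h] i
      unfolding Fv_def by auto
  qed
  have "(\<lambda>q. if q \<in> J then (\<integral>x. Fv x q \<partial>\<mu>) else 0) \<in> coneh T"
    by (rule mean[OF finJ TJ AEF]) (use hb in \<open>auto simp: has_bochner_integral_iff\<close>)
  moreover have "(\<lambda>q. if q \<in> J then (\<integral>x. Fv x q \<partial>\<mu>) else 0) =
     (\<lambda>q. if q \<in> J then (if snd (snd q) then Re (A (fst q) (fst (snd q))) else Im (A (fst q) (fst (snd q)))) else 0)"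
    using hb by (auto simp: has_bochner_integral_iff)
  ultimately have "(\<lambda>q. if q \<in> J then (if snd (snd q) then Re (A (fst q) (fst (snd q))) else Im (A (fst q) (fst (snd q)))) else 0) \<in> coneh T"
    by simp
  then obtain r c t where rc: "\<forall>l<(r::nat). 0 \<le> c l \<and> t l \<in> T"
     "(\<lambda>q. if q \<in> J then (if snd (snd q) then Re (A (fst q) (fst (snd q))) else Im (A (fst q) (fst (snd q)))) else 0)
       = (\<lambda>q. \<Sum>l<r. c l * t l q)"
    unfolding coneh_def by blast
  have "\<forall>l. \<exists>y. l < r \<longrightarrow> y \<in> ?S \<and> t l = Fv y" using rc(1) unfolding T_def by blast
  then obtain x where x: "\<And>l. l < r \<Longrightarrow> x l \<in> ?S \<and> t l = Fv (x l)" by metis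
  have Aeq: "A i j = (\<Sum>l<r. complex_of_real (c l) * hten dims (x l) i j)" if "i \<in> midx dims" "j \<in> midx dims" for i j
  proof (rule complex_eqI)
    have "Re (A i j) = (\<Sum>l<r. c l * t l (i, j, True))"
      using fun_cong[OF rc(2), of "(i, j, True)"] that J_def by auto
    also have "\<dots> = (\<Sum>l<r. c l * Re (hten dims (x l) i j))"
      using x that by (intro sum.cong) (auto simp: Fv_def)
    finally show "Re (A i j) = Re (\<Sum>l<r. complex_of_real (c l) * hten dims (x l) i j)"
      by (simp add: Re_sum)
    have "Im (A i j) = (\<Sum>l<r. c l * t l (i, j, False))"
      using fun_cong[OF rc(2), of "(i, j, False)"] that J_def by auto
    also have "\<dots> = (\<Sum>l<r. c l * Im (hten dims (x l) i j))"
      using x that by (intro sum.cong) (auto simp: Fv_def)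
    finally show "Im (A i j) = Im (\<Sum>l<r. complex_of_real (c l) * hten dims (x l) i j)"
      by (simp add: Im_sum)
  qed
  define u where "u = (\<lambda>l k ii. (if k = 0 then complex_of_real (sqrt (c l)) else 1) * x l k ii)"
  have m0: "0 < length dims" using dne by simp
  have hu: "hten dims (u l) i j = complex_of_real (c l) * hten dims (x l) i j" if "l < r" for l i j
  proof (cases "i \<in> midx dims \<and> j \<in> midx dims")
    case True
    have "(\<Prod>k<length dims. u l k (i ! k) * cnj (u l k (j ! k))) =
          (\<Prod>k<length dims. (if k = 0 then complex_of_real (c l) else 1) * (x l k (i ! k) * cnj (x l k (j ! k))))"
    proof (rule prod.cong[OF refl])
      fix k
      have "complex_of_real (sqrt (c l)) * cnj (complex_of_real (sqrt (c l))) = complex_of_real (c l)"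
        using rc(1) that by (simp flip: of_real_mult)
      thus "u l k (i ! k) * cnj (u l k (j ! k)) = (if k = 0 then complex_of_real (c l) else 1) * (x l k (i ! k) * cnj (x l k (j ! k)))"
        unfolding u_def by (auto simp: algebra_simps)
    qed
    also have "\<dots> = (\<Prod>k<length dims. (if k = 0 then complex_of_real (c l) else 1)) * (\<Prod>k<length dims. x l k (i ! k) * cnj (x l k (j ! k)))"
      by (rule prod.distrib)
    also have "(\<Prod>k<length dims. (if k = 0 then complex_of_real (c l) else 1)) = complex_of_real (c l)"
      using m0 by (simp add: prod.delta)
    finally show ?thesis using True unfolding hten_def by simp
  next
    case False thus ?thesis unfolding hten_def by auto
  qed
  have "A = (\<lambda>i j. \<Sum>l<r. hten dims (u l) i j)"
  proof (intro ext)
    fix i j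
    show "A i j = (\<Sum>l<r. hten dims (u l) i j)"
    proof (cases "i \<in> midx dims \<and> j \<in> midx dims")
      case True thus ?thesis using Aeq hu by auto
    next
      case False
      hence "A i j = 0" using AH unfolding herm_tensors_def by blast
      thus ?thesis using False unfolding hten_def by auto
    qed
  qed
  moreover have "u l k ii \<in> K" if "l < r" "k < length dims" "ii < dims ! k" for l k ii
  proof -
    have "x l k ii \<in> K" using x[OF that(1)] that(2,3) unfolding sphere_prod_def by blast
    thus ?thesis using K unfolding u_def by auto
  qed
  ultimately show ?thesis unfolding separable_def by blast
qed


lemma sq_div_sum:
  fixes v :: "nat \<Rightarrow> complex"
  assumes "sqrt (\<Sum>ii<n. (cmod (v ii))\<^sup>2) \<noteq> 0"
  shows "(\<Sum>ii<n. (cmod (v ii / complex_of_real (sqrt (\<Sum>ii<n. (cmod (v ii))\<^sup>2))))\<^sup>2) = 1"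
proof -
  define s where "s = (\<Sum>ii<n. (cmod (v ii))\<^sup>2)"
  have s0: "s \<ge> 0" unfolding s_def by (auto intro: sum_nonneg)
  have "sqrt s \<noteq> 0" using assms s_def by simp
  hence sp: "s > 0" using s0 by auto
  have "(\<Sum>ii<n. (cmod (v ii / complex_of_real (sqrt s)))\<^sup>2) = (\<Sum>ii<n. (cmod (v ii))\<^sup>2 / s)"
    using s0 by (intro sum.cong) (auto simp: norm_divide power_divide)
  also have "\<dots> = (\<Sum>ii<n. (cmod (v ii))\<^sup>2) / s" by (simp add: sum_divide_distrib)
  also have "\<dots> = s / s" unfolding s_def ..
  finally show ?thesis using sp s_def by simp
qed

lemma fwd:
  fixes K :: "complex set" and dims :: "nat list"
    and A :: "nat list \<Rightarrow> nat list \<Rightarrow> complex"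
  assumes K: "K = \<real> \<or> K = UNIV"
    and dpos: "\<forall>k<length dims. 0 < dims ! k"
    and sep: "separable K dims A"
  shows "\<exists>\<mu> :: (nat \<Rightarrow> nat \<Rightarrow> complex) measure.
        sets \<mu> = sets borel \<and>
        msupport \<mu> \<subseteq> sphere_prod K dims \<and>
        (\<forall>i\<in>midx dims. \<forall>j\<in>midx dims.
           has_bochner_integral \<mu> (\<lambda>x. hten dims x i j) (A i j))"
proof -
  let ?S = "sphere_prod K dims"
  let ?m = "length dims"
  obtain r u where uK: "\<forall>l<(r::nat). \<forall>k<?m. \<forall>i<dims ! k. u l k i \<in> K"
    and Aeq: "A = (\<lambda>i j. \<Sum>l<r. hten dims (u l) i j)"
    using sep unfolding separable_def by blast
  define nk where "nk = (\<lambda>l k. sqrt (\<Sum>ii<dims ! k. (cmod (u l k ii))\<^sup>2))"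
  define good where "good = (\<lambda>l. \<forall>k<?m. nk l k \<noteq> 0)"
  define x0 where "x0 = (\<lambda>k (ii::nat). if k < ?m \<and> ii = 0 then (1::complex) else 0)"
  define xx where "xx = (\<lambda>l. if good l then (\<lambda>k ii. if k < ?m \<and> ii < dims ! k then u l k ii / complex_of_real (nk l k) else 0) else x0)"
  define c where "c = (\<lambda>l. if good l then (\<Prod>k<?m. (nk l k)\<^sup>2) else 0)"
  have K0: "0 \<in> K" and K1: "1 \<in> K" using K by auto
  have x0S: "x0 \<in> ?S"
  proof -
    have "(\<Sum>ii<dims ! k. (cmod (x0 k ii))\<^sup>2) = 1" if "k < ?m" for k
    proof -
      have "(\<Sum>ii<dims ! k. (cmod (x0 k ii))\<^sup>2) = (\<Sum>ii<dims ! k. if ii = 0 then 1 else 0)"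
        using that by (intro sum.cong) (auto simp: x0_def)
      also have "\<dots> = 1" using dpos that by simp
      finally show ?thesis .
    qed
    thus ?thesis unfolding sphere_prod_def using K0 K1 dpos by (auto simp: x0_def)
  qed
  have xxS: "xx l \<in> ?S" if "l < r" for l
  proof (cases "good l")
    case True
    have "(\<Sum>ii<dims ! k. (cmod (xx l k ii))\<^sup>2) = 1" if k: "k < ?m" for k
    proof -
      have "(\<Sum>ii<dims ! k. (cmod (xx l k ii))\<^sup>2) = (\<Sum>ii<dims ! k. (cmod (u l k ii / complex_of_real (nk l k)))\<^sup>2)"
        using True k by (intro sum.cong) (auto simp: xx_def)
      also have "\<dots> = 1" unfolding nk_def by (rule sq_div_sum) (use True k in \<open>auto simp: good_def nk_def\<close>)
      finally show ?thesis .
    qed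
    moreover have "xx l k ii \<in> K" if "k < ?m" "ii < dims ! k" for k ii
    proof -
      have "u l k ii \<in> K" using uK \<open>l < r\<close> that by blast
      thus ?thesis using K True that unfolding xx_def by auto
    qed
    ultimately show ?thesis unfolding sphere_prod_def using True by (auto simp: xx_def)
  next
    case False thus ?thesis using x0S by (simp add: xx_def)
  qed
  have hx: "hten dims (u l) i j = complex_of_real (c l) * hten dims (xx l) i j"
    if "i \<in> midx dims" "j \<in> midx dims" for l i j
  proof (cases "good l")
    case True
    have ik: "i ! k < dims ! k" "j ! k < dims ! k" if "k < ?m" for k
      using \<open>i \<in> midx dims\<close> \<open>j \<in> midx dims\<close> that unfolding midx_def by auto
    have "(\<Prod>k<?m. u l k (i ! k) * cnj (u l k (j ! k))) =
          (\<Prod>k<?m. complex_of_real ((nk l k)\<^sup>2) * (xx l k (i ! k) * cnj (xx l k (j ! k))))"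
    proof (rule prod.cong[OF refl])
      fix k assume "k \<in> {..<?m}"
      hence k: "k < ?m" by simp
      have n0: "nk l k \<noteq> 0" using True k good_def by auto
      have "u l k (i ! k) = complex_of_real (nk l k) * xx l k (i ! k)"
           "u l k (j ! k) = complex_of_real (nk l k) * xx l k (j ! k)"
        using ik[OF k] k True n0 by (auto simp: xx_def)
      thus "u l k (i ! k) * cnj (u l k (j ! k)) = complex_of_real ((nk l k)\<^sup>2) * (xx l k (i ! k) * cnj (xx l k (j ! k)))"
        by (simp add: power2_eq_square algebra_simps)
    qed
    also have "\<dots> = complex_of_real (c l) * (\<Prod>k<?m. xx l k (i ! k) * cnj (xx l k (j ! k)))"
      unfolding prod.distrib c_def using True by simp
    finally show ?thesis using that unfolding hten_def by simp
  next
    case False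
    then obtain k where k: "k < ?m" "nk l k = 0" unfolding good_def by auto
    have "(\<Sum>ii<dims ! k. (cmod (u l k ii))\<^sup>2) = 0" using k(2) unfolding nk_def by simp
    hence "\<forall>ii\<in>{..<dims ! k}. (cmod (u l k ii))\<^sup>2 = 0" by (subst sum_nonneg_eq_0_iff[symmetric]) auto
    moreover have "i ! k < dims ! k" using \<open>i \<in> midx dims\<close> k unfolding midx_def by auto
    ultimately have "u l k (i ! k) = 0" by auto
    hence "(\<Prod>k<?m. u l k (i ! k) * cnj (u l k (j ! k))) = 0" using k(1)
      by (intro prod_zero) auto
    thus ?thesis using that False unfolding hten_def c_def by simp
  qed
  have c0: "0 \<le> c l" for l unfolding c_def by (auto intro: prod_nonneg)
  define pm where "pm = point_measure {..<r} (\<lambda>l. ennreal (c l))"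
  define \<mu> where "\<mu> = distr pm borel xx"
  have meas: "xx \<in> measurable pm borel" unfolding pm_def by simp
  have "sets \<mu> = sets borel" unfolding \<mu>_def by simp
  moreover have "msupport \<mu> \<subseteq> ?S"
  proof
    fix y assume y: "y \<in> msupport \<mu>"
    show "y \<in> ?S"
    proof (rule ccontr)
      assume yS: "y \<notin> ?S"
      define U where "U = - (xx ` {..<r})"
      have "open U" unfolding U_def by (intro open_Compl finite_imp_closed) auto
      moreover have "y \<in> U" using yS xxS unfolding U_def by auto
      moreover have "emeasure \<mu> U = 0"
      proof -
        have "emeasure \<mu> U = emeasure pm (xx -` U \<inter> space pm)"
          unfolding \<mu>_def using meas \<open>open U\<close> by (intro emeasure_distr) auto
        also have "xx -` U \<inter> space pm = {}" unfolding U_def pm_def space_point_measure by auto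
        finally show ?thesis by simp
      qed
      ultimately show False using y unfolding msupport_def by auto
    qed
  qed
  moreover have "has_bochner_integral \<mu> (\<lambda>x. hten dims x i j) (A i j)"
    if "i \<in> midx dims" "j \<in> midx dims" for i j
  proof -
    have "integrable pm (\<lambda>l. hten dims (xx l) i j)" unfolding pm_def
      by (rule integrable_point_measure_finite) simp
    moreover have "integral\<^sup>L pm (\<lambda>l. hten dims (xx l) i j) = A i j"
    proof -
      have "integral\<^sup>L pm (\<lambda>l. hten dims (xx l) i j) = (\<Sum>l<r. c l *\<^sub>R hten dims (xx l) i j)"
        unfolding pm_def using c0 by (intro lebesgue_integral_point_measure_finite) auto
      also have "\<dots> = A i j" unfolding Aeq using hx[OF that] by (simp add: scaleR_conv_of_real)
      finally show ?thesis .
    qed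
    ultimately have "has_bochner_integral pm (\<lambda>l. hten dims (xx l) i j) (A i j)"
      by (simp add: has_bochner_integral_iff)
    thus ?thesis unfolding \<mu>_def by (intro has_bochner_integral_distr[OF hten_meas meas])
  qed
  ultimately show ?thesis by blast
qed


theorem theorem6p4:
  fixes K :: "complex set" and dims :: "nat list"
    and A :: "nat list \<Rightarrow> nat list \<Rightarrow> complex"
  assumes "K = \<real> \<or> K = UNIV"
    and "dims \<noteq> []" and "\<forall>k<length dims. 0 < dims ! k"
    and "A \<in> herm_tensors K dims"
  shows "separable K dims A \<longleftrightarrow>
    (\<exists>\<mu> :: (nat \<Rightarrow> nat \<Rightarrow> complex) measure.
        sets \<mu> = sets borel \<and>
        msupport \<mu> \<subseteq> sphere_prod K dims \<and>
        (\<forall>i\<in>midx dims. \<forall>j\<in>midx dims.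
           has_bochner_integral \<mu> (\<lambda>x. hten dims x i j) (A i j)))"
  using fwd[OF assms(1,3)] bwd[OF assms(1,2,4)] by blast

end
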